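(* For a finite-dimensional Lie algebra $L$ over a field $F$, the following are pairwise equivalent: 1. $L$ is primitive of type 1 or of type 3; 2. there is a minimal ideal $B$ of $L$ and a subalgebra $U$ of $L$ such that $U$ is a complement of $B$ in $L$ and $U$ is also a complement of $C_L(B)$ in $L$; 3. there is a minimal ideal $B$ of $L$ such that $L$ is isomorphic to the semidirect sum $B \ltimes L/C_L(B)$ (with $L/C_L(B)$ acting on $B$ via the induced adjoint action).
   Context: The core $U_L$ of a subalgebra $U$ is the largest ideal of $L$ contained in $U$; $L$ is primitive if it has a maximal subalgebra $U$ with $U_L = 0$. A primitive Lie algebra is of type 1 if it has a unique minimal ideal which is abelian; of type 2 if it has a unique minimal ideal which is non-abelian; of type 3 if it has precisely two distinct minimal ideals, each non-abelian. A subalgebra $U$ complements an ideal $A$ if $L = A + U$ and $A \cap U = 0$. $C_L(B) = \{x\in L : [x,B]=0\}$. *)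

theory Defs
  imports Main "HOL.Vector_Spaces"
begin

text \<open>A Lie algebra L over a field F is modelled as the whole type 'a (an abelian group)
 with a scalar multiplication scale by the field type 'f and a bracket br.\<close>

definition lie_algebra :: "('f::field \<Rightarrow> 'a::ab_group_add \<Rightarrow> 'a) \<Rightarrow> ('a \<Rightarrow> 'a \<Rightarrow> 'a) \<Rightarrow> bool" where
  "lie_algebra scale br \<longleftrightarrow> vector_space scale \<and>
     (\<forall>x y z. br (x + y) z = br x z + br y z) \<and>
     (\<forall>x y z. br x (y + z) = br x y + br x z) \<and>
     (\<forall>a x y. br (scale a x) y = scale a (br x y)) \<and>
     (\<forall>a x y. br x (scale a y) = scale a (br x y)) \<and>
     (\<forall>x. br x x = 0) \<and>
     (\<forall>x y z. br x (br y z) + br y (br z x) + br z (br x y) = 0)"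

definition fin_dim :: "('f::field \<Rightarrow> 'a::ab_group_add \<Rightarrow> 'a) \<Rightarrow> bool" where
  "fin_dim scale \<longleftrightarrow> (\<exists>S. finite S \<and> module.span scale S = UNIV)"

definition lie_subalgebra :: "('f::field \<Rightarrow> 'a::ab_group_add \<Rightarrow> 'a) \<Rightarrow> ('a \<Rightarrow> 'a \<Rightarrow> 'a) \<Rightarrow> 'a set \<Rightarrow> bool" where
  "lie_subalgebra scale br U \<longleftrightarrow> module.subspace scale U \<and> (\<forall>x\<in>U. \<forall>y\<in>U. br x y \<in> U)"

definition lie_ideal :: "('f::field \<Rightarrow> 'a::ab_group_add \<Rightarrow> 'a) \<Rightarrow> ('a \<Rightarrow> 'a \<Rightarrow> 'a) \<Rightarrow> 'a set \<Rightarrow> bool" where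
  "lie_ideal scale br I \<longleftrightarrow> module.subspace scale I \<and> (\<forall>x. \<forall>y\<in>I. br x y \<in> I)"

definition maximal_subalgebra :: "('f::field \<Rightarrow> 'a::ab_group_add \<Rightarrow> 'a) \<Rightarrow> ('a \<Rightarrow> 'a \<Rightarrow> 'a) \<Rightarrow> 'a set \<Rightarrow> bool" where
  "maximal_subalgebra scale br U \<longleftrightarrow> lie_subalgebra scale br U \<and> U \<noteq> UNIV \<and>
     (\<forall>V. lie_subalgebra scale br V \<and> U \<subseteq> V \<longrightarrow> V = U \<or> V = UNIV)"

definition core :: "('f::field \<Rightarrow> 'a::ab_group_add \<Rightarrow> 'a) \<Rightarrow> ('a \<Rightarrow> 'a \<Rightarrow> 'a) \<Rightarrow> 'a set \<Rightarrow> 'a set" where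
  "core scale br U = module.span scale (\<Union>{I. lie_ideal scale br I \<and> I \<subseteq> U})"

definition primitive :: "('f::field \<Rightarrow> 'a::ab_group_add \<Rightarrow> 'a) \<Rightarrow> ('a \<Rightarrow> 'a \<Rightarrow> 'a) \<Rightarrow> bool" where
  "primitive scale br \<longleftrightarrow> (\<exists>U. maximal_subalgebra scale br U \<and> core scale br U = {0})"

definition minimal_ideal :: "('f::field \<Rightarrow> 'a::ab_group_add \<Rightarrow> 'a) \<Rightarrow> ('a \<Rightarrow> 'a \<Rightarrow> 'a) \<Rightarrow> 'a set \<Rightarrow> bool" where
  "minimal_ideal scale br I \<longleftrightarrow> lie_ideal scale br I \<and> I \<noteq> {0} \<and>
     (\<forall>J. lie_ideal scale br J \<and> J \<subseteq> I \<longrightarrow> J = {0} \<or> J = I)"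

definition abelian :: "('a::ab_group_add \<Rightarrow> 'a \<Rightarrow> 'a) \<Rightarrow> 'a set \<Rightarrow> bool" where
  "abelian br I \<longleftrightarrow> (\<forall>x\<in>I. \<forall>y\<in>I. br x y = 0)"

definition primitive_type1 :: "('f::field \<Rightarrow> 'a::ab_group_add \<Rightarrow> 'a) \<Rightarrow> ('a \<Rightarrow> 'a \<Rightarrow> 'a) \<Rightarrow> bool" where
  "primitive_type1 scale br \<longleftrightarrow> primitive scale br \<and>
     (\<exists>!B. minimal_ideal scale br B) \<and> (\<forall>B. minimal_ideal scale br B \<longrightarrow> abelian br B)"

definition primitive_type2 :: "('f::field \<Rightarrow> 'a::ab_group_add \<Rightarrow> 'a) \<Rightarrow> ('a \<Rightarrow> 'a \<Rightarrow> 'a) \<Rightarrow> bool" where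
  "primitive_type2 scale br \<longleftrightarrow> primitive scale br \<and>
     (\<exists>!B. minimal_ideal scale br B) \<and> (\<forall>B. minimal_ideal scale br B \<longrightarrow> \<not> abelian br B)"

definition primitive_type3 :: "('f::field \<Rightarrow> 'a::ab_group_add \<Rightarrow> 'a) \<Rightarrow> ('a \<Rightarrow> 'a \<Rightarrow> 'a) \<Rightarrow> bool" where
  "primitive_type3 scale br \<longleftrightarrow> primitive scale br \<and>
     (\<exists>B1 B2. B1 \<noteq> B2 \<and> {B. minimal_ideal scale br B} = {B1, B2}) \<and>
     (\<forall>B. minimal_ideal scale br B \<longrightarrow> \<not> abelian br B)"

definition complements :: "'a::ab_group_add set \<Rightarrow> 'a set \<Rightarrow> bool" where
  "complements U A \<longleftrightarrow> (\<forall>x. \<exists>a\<in>A. \<exists>u\<in>U. x = a + u) \<and> A \<inter> U = {0}"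

definition centralizer :: "('a::ab_group_add \<Rightarrow> 'a \<Rightarrow> 'a) \<Rightarrow> 'a set \<Rightarrow> 'a set" where
  "centralizer br B = {x. \<forall>b\<in>B. br x b = 0}"

definition coset :: "'a::ab_group_add set \<Rightarrow> 'a \<Rightarrow> 'a set" where
  "coset C x = (\<lambda>c. x + c) ` C"

definition quot :: "'a::ab_group_add set \<Rightarrow> 'a set set" where
  "quot C = range (coset C)"

definition rep :: "'a set \<Rightarrow> 'a" where
  "rep X = (SOME x. x \<in> X)"

definition q_add :: "'a::ab_group_add set \<Rightarrow> 'a set \<Rightarrow> 'a set \<Rightarrow> 'a set" where
  "q_add C X Y = coset C (rep X + rep Y)"

definition q_scale :: "('f::field \<Rightarrow> 'a::ab_group_add \<Rightarrow> 'a) \<Rightarrow> 'a set \<Rightarrow> 'f \<Rightarrow> 'a set \<Rightarrow> 'a set" where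
  "q_scale scale C a X = coset C (scale a (rep X))"

definition q_br :: "('a::ab_group_add \<Rightarrow> 'a \<Rightarrow> 'a) \<Rightarrow> 'a set \<Rightarrow> 'a set \<Rightarrow> 'a set \<Rightarrow> 'a set" where
  "q_br br C X Y = coset C (br (rep X) (rep Y))"

text \<open>Semidirect sum B \<ltimes> L/C with L/C acting on B by the induced adjoint action
  X \<cdot> b = [x, b] for any representative x of X (well defined when C centralizes B).\<close>

definition sd_add :: "'a::ab_group_add set \<Rightarrow> 'a \<times> 'a set \<Rightarrow> 'a \<times> 'a set \<Rightarrow> 'a \<times> 'a set" where
  "sd_add C p q = (fst p + fst q, q_add C (snd p) (snd q))"

definition sd_scale :: "('f::field \<Rightarrow> 'a::ab_group_add \<Rightarrow> 'a) \<Rightarrow> 'a set \<Rightarrow> 'f \<Rightarrow> 'a \<times> 'a set \<Rightarrow> 'a \<times> 'a set" where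
  "sd_scale scale C a p = (scale a (fst p), q_scale scale C a (snd p))"

definition sd_br :: "('a::ab_group_add \<Rightarrow> 'a \<Rightarrow> 'a) \<Rightarrow> 'a set \<Rightarrow> 'a \<times> 'a set \<Rightarrow> 'a \<times> 'a set \<Rightarrow> 'a \<times> 'a set" where
  "sd_br br C p q =
     (br (fst p) (fst q) + br (rep (snd p)) (fst q) - br (rep (snd q)) (fst p),
      q_br br C (snd p) (snd q))"

definition iso_semidirect :: "('f::field \<Rightarrow> 'a::ab_group_add \<Rightarrow> 'a) \<Rightarrow> ('a \<Rightarrow> 'a \<Rightarrow> 'a) \<Rightarrow> 'a set \<Rightarrow> bool" where
  "iso_semidirect scale br B \<longleftrightarrow>
     (let C = centralizer br B in
      \<exists>f. bij_betw f UNIV (B \<times> quot C) \<and>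
        (\<forall>x y. f (x + y) = sd_add C (f x) (f y)) \<and>
        (\<forall>a x. f (scale a x) = sd_scale scale C a (f x)) \<and>
        (\<forall>x y. f (br x y) = sd_br br C (f x) (f y)))"

end

theory Submission
  imports Defs
begin



locale lie = vector_space scale for scale :: "'f::field \<Rightarrow> 'a::ab_group_add \<Rightarrow> 'a" +
  fixes br :: "'a \<Rightarrow> 'a \<Rightarrow> 'a"
  assumes add_l: "br (x + y) z = br x z + br y z"
    and add_r: "br x (y + z) = br x y + br x z"
    and sc_l: "br (scale a x) y = scale a (br x y)"
    and sc_r: "br x (scale a y) = scale a (br x y)"
    and alt: "br x x = 0"
    and jac: "br x (br y z) + br y (br z x) + br z (br x y) = 0"

lemma lie_from: "lie_algebra scale br \<Longrightarrow> lie scale br"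
  unfolding lie_algebra_def lie_def lie_axioms_def by auto

context lie begin

lemma zero_l[simp]: "br 0 x = 0"
  using add_l[of 0 0 x] by simp
lemma zero_r[simp]: "br x 0 = 0"
  using add_r[of x 0 0] by simp
lemma anti: "br x y = - br y x"
proof -
  have "br (x+y) (x+y) = 0" by (rule alt)
  hence "br x x + br y x + (br x y + br y y) = 0" by (simp add: add_l add_r)
  hence "br x y + br y x = 0" by (simp add: alt add.commute)
  thus ?thesis by (simp add: eq_neg_iff_add_eq_0)
qed
lemma neg_l: "br (- x) y = - br x y"
  using add_l[of x "-x" y] by (simp add: eq_neg_iff_add_eq_0 add.commute)
lemma neg_r: "br x (- y) = - br x y"
  using add_r[of x y "-y"] by (simp add: eq_neg_iff_add_eq_0 add.commute)
lemma diff_l: "br (x - y) z = br x z - br y z"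
  using add_l[of x "-y" z] by (simp add: neg_l)
lemma diff_r: "br x (y - z) = br x y - br x z"
  using add_r[of x y "-z"] by (simp add: neg_r)

lemma ideal_sub: "lie_ideal scale br I \<Longrightarrow> subspace I"
  unfolding lie_ideal_def by simp
lemma ideal_l: "lie_ideal scale br I \<Longrightarrow> y \<in> I \<Longrightarrow> br x y \<in> I"
  unfolding lie_ideal_def by simp
lemma ideal_r: "lie_ideal scale br I \<Longrightarrow> y \<in> I \<Longrightarrow> br y x \<in> I"
  by (metis anti ideal_l ideal_sub subspace_neg)
lemma sub_sub: "lie_subalgebra scale br U \<Longrightarrow> subspace U"
  unfolding lie_subalgebra_def by simp
lemma sub_br: "lie_subalgebra scale br U \<Longrightarrow> x \<in> U \<Longrightarrow> y \<in> U \<Longrightarrow> br x y \<in> U"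
  unfolding lie_subalgebra_def by simp

lemma ideal_inter: "lie_ideal scale br I \<Longrightarrow> lie_ideal scale br J \<Longrightarrow> lie_ideal scale br (I \<inter> J)"
  unfolding lie_ideal_def by (auto intro: subspace_inter)

lemma ideal_from_sum:
  assumes "subspace W" "\<forall>x. \<exists>p\<in>P. \<exists>q\<in>Q. x = p + q"
    "\<And>p w. p \<in> P \<Longrightarrow> w \<in> W \<Longrightarrow> br p w \<in> W"
    "\<And>q w. q \<in> Q \<Longrightarrow> w \<in> W \<Longrightarrow> br q w \<in> W"
  shows "lie_ideal scale br W"
  unfolding lie_ideal_def
proof (intro conjI allI ballI)
  show "subspace W" by fact
  fix x w assume w: "w \<in> W"
  obtain p q where "p \<in> P" "q \<in> Q" "x = p + q" using assms(2) by blast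
  thus "br x w \<in> W" using assms(1,3,4) w by (simp add: add_l subspace_add)
qed

lemma centralizer_ideal:
  assumes "lie_ideal scale br B"
  shows "lie_ideal scale br (centralizer br B)"
  unfolding lie_ideal_def
proof (intro conjI allI ballI)
  show "subspace (centralizer br B)"
    unfolding subspace_def centralizer_def by (simp add: add_l sc_l)
  fix x y assume y: "y \<in> centralizer br B"
  show "br x y \<in> centralizer br B"
    unfolding centralizer_def
  proof (intro CollectI ballI)
    fix b assume b: "b \<in> B"
    have "br b x \<in> B" using ideal_r[OF assms b] .
    hence "br y (br b x) = 0" using y unfolding centralizer_def by simp
    moreover have "br y b = 0" using y b unfolding centralizer_def by simp
    moreover have "br x (br y b) + br y (br b x) + br b (br x y) = 0" by (rule jac)
    ultimately have "br b (br x y) = 0" by simp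
    thus "br (br x y) b = 0" by (metis anti neg_equal_0_iff_equal)
  qed
qed

lemma cent_zero: "c \<in> centralizer br B \<Longrightarrow> b \<in> B \<Longrightarrow> br c b = 0"
  unfolding centralizer_def by simp
lemma cent_zero': "c \<in> centralizer br B \<Longrightarrow> b \<in> B \<Longrightarrow> br b c = 0"
  by (metis anti cent_zero neg_0_equal_iff_equal)

lemma min_ideal: "minimal_ideal scale br B \<Longrightarrow> lie_ideal scale br B"
  unfolding minimal_ideal_def by simp

lemma min_nz: assumes "minimal_ideal scale br B" obtains b where "b \<in> B" "b \<noteq> 0"
proof -
  have "B \<noteq> {0}" "0 \<in> B" using assms subspace_0[OF ideal_sub[OF min_ideal[OF assms]]]
    unfolding minimal_ideal_def by auto
  thus ?thesis using that by blast
qed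

lemma min_inter:
  assumes "minimal_ideal scale br B" "minimal_ideal scale br B'" "B \<noteq> B'"
  shows "B \<inter> B' = {0}"
proof -
  have "lie_ideal scale br (B \<inter> B')" using ideal_inter min_ideal assms by blast
  hence "B \<inter> B' = {0} \<or> B \<inter> B' = B" using assms(1) unfolding minimal_ideal_def by blast
  moreover have "B \<inter> B' \<noteq> B"
  proof
    assume "B \<inter> B' = B"
    hence "B \<subseteq> B'" by blast
    hence "B = {0} \<or> B = B'" using assms(2) min_ideal[OF assms(1)] unfolding minimal_ideal_def by blast
    thus False using assms(1,3) unfolding minimal_ideal_def by blast
  qed
  ultimately show ?thesis by blast
qed

lemma min_commute:
  assumes "minimal_ideal scale br B" "minimal_ideal scale br B'" "B \<noteq> B'" "y \<in> B'"
  shows "y \<in> centralizer br B"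
  unfolding centralizer_def
proof (intro CollectI ballI)
  fix b assume "b \<in> B"
  hence "br y b \<in> B \<inter> B'" using ideal_l[OF min_ideal[OF assms(1)]] ideal_r[OF min_ideal[OF assms(2)]] assms(4)
    by blast
  thus "br y b = 0" using min_inter[OF assms(1-3)] by blast
qed

lemma core_zero:
  assumes "core scale br U = {0}" "lie_ideal scale br I" "I \<subseteq> U"
  shows "I = {0}"
proof -
  have "I \<subseteq> \<Union>{I. lie_ideal scale br I \<and> I \<subseteq> U}" using assms(2,3) by blast
  also have "\<dots> \<subseteq> core scale br U" unfolding core_def by (rule span_superset)
  finally have "I \<subseteq> {0}" using assms(1) by simp
  moreover have "0 \<in> I" using subspace_0[OF ideal_sub[OF assms(2)]] .
  ultimately show ?thesis by auto
qed

lemma max_sum: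
  assumes "maximal_subalgebra scale br U" "lie_ideal scale br I" "\<not> I \<subseteq> U"
  shows "\<forall>x. \<exists>i\<in>I. \<exists>u\<in>U. x = i + u"
proof -
  let ?V = "{x + y |x y. x \<in> I \<and> y \<in> U}"
  have U: "lie_subalgebra scale br U" using assms(1) unfolding maximal_subalgebra_def by simp
  have sV: "subspace ?V" using subspace_sums ideal_sub[OF assms(2)] sub_sub[OF U] by blast
  have "lie_subalgebra scale br ?V"
    unfolding lie_subalgebra_def
  proof (intro conjI ballI)
    show "subspace ?V" by fact
    fix x y assume "x \<in> ?V" "y \<in> ?V"
    then obtain i u i' u' where iu: "i \<in> I" "u \<in> U" "x = i + u" "i' \<in> I" "u' \<in> U" "y = i' + u'" by blast
    have "br x y = (br i (i' + u') + br u i') + br u u'" using iu by (simp add: add_l add_r add.assoc)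
    moreover have "br i (i' + u') + br u i' \<in> I"
      using iu ideal_r[OF assms(2)] ideal_l[OF assms(2)] subspace_add[OF ideal_sub[OF assms(2)]] by blast
    moreover have "br u u' \<in> U" using iu sub_br[OF U] by blast
    ultimately show "br x y \<in> ?V" by blast
  qed
  moreover have "U \<subseteq> ?V"
  proof
    fix u assume "u \<in> U" thus "u \<in> ?V" using subspace_0[OF ideal_sub[OF assms(2)]] by force
  qed
  ultimately have "?V = U \<or> ?V = UNIV" using assms(1) unfolding maximal_subalgebra_def by blast
  moreover have "?V \<noteq> U"
  proof
    assume "?V = U"
    moreover have "I \<subseteq> ?V" using subspace_0[OF sub_sub[OF U]] by force
    ultimately show False using assms(3) by simp
  qed
  ultimately show ?thesis by blast
qed

end


context lie begin

abbreviation cond2 where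
 "cond2 \<equiv> (\<exists>B U. minimal_ideal scale br B \<and> lie_subalgebra scale br U \<and>
              complements U B \<and> complements U (centralizer br B))"

lemma type1_cond2:
  assumes "primitive_type1 scale br" shows cond2
proof -
  obtain U where U: "maximal_subalgebra scale br U" "core scale br U = {0}"
    using assms unfolding primitive_type1_def primitive_def by blast
  obtain B where B: "minimal_ideal scale br B" using assms unfolding primitive_type1_def by blast
  have ab: "abelian br B" using assms B unfolding primitive_type1_def by blast
  have Ui: "lie_subalgebra scale br U" using U unfolding maximal_subalgebra_def by simp
  have Bi: "lie_ideal scale br B" using min_ideal[OF B] .
  have nsub: "\<not> B \<subseteq> U" using core_zero[OF U(2) Bi] B unfolding minimal_ideal_def by blast
  have sum: "\<forall>x. \<exists>b\<in>B. \<exists>u\<in>U. x = b + u" using max_sum[OF U(1) Bi nsub] .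
  let ?C = "centralizer br B"
  have Ci: "lie_ideal scale br ?C" using centralizer_ideal[OF Bi] .
  have "lie_ideal scale br (U \<inter> B)"
  proof (rule ideal_from_sum[OF _ sum])
    show "subspace (U \<inter> B)" using subspace_inter sub_sub[OF Ui] ideal_sub[OF Bi] by blast
    fix p w assume "p \<in> B" "w \<in> U \<inter> B"
    hence "br p w = 0" using ab unfolding abelian_def by blast
    thus "br p w \<in> U \<inter> B" using subspace_0 sub_sub[OF Ui] ideal_sub[OF Bi] by simp
  next
    fix q w assume "q \<in> U" "w \<in> U \<inter> B"
    thus "br q w \<in> U \<inter> B" using sub_br[OF Ui] ideal_l[OF Bi] by blast
  qed
  hence UB: "U \<inter> B = {0}" using core_zero[OF U(2)] by blast
  have "lie_ideal scale br (?C \<inter> U)"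
  proof (rule ideal_from_sum[OF _ sum])
    show "subspace (?C \<inter> U)" using subspace_inter sub_sub[OF Ui] ideal_sub[OF Ci] by blast
    fix p w assume "p \<in> B" "w \<in> ?C \<inter> U"
    hence "br p w = 0" using cent_zero' by blast
    thus "br p w \<in> ?C \<inter> U" using subspace_0 sub_sub[OF Ui] ideal_sub[OF Ci] by simp
  next
    fix q w assume "q \<in> U" "w \<in> ?C \<inter> U"
    thus "br q w \<in> ?C \<inter> U" using sub_br[OF Ui] ideal_l[OF Ci] by blast
  qed
  hence CU: "?C \<inter> U = {0}" using core_zero[OF U(2)] by blast
  have BC: "B \<subseteq> ?C" using ab unfolding abelian_def centralizer_def by blast
  have "complements U B" unfolding complements_def using sum UB by blast
  moreover have "complements U ?C" unfolding complements_def using sum CU BC by blast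
  ultimately show ?thesis using B Ui by blast
qed

lemma type3_cond2:
  assumes "primitive_type3 scale br" shows cond2
proof -
  obtain U where U: "maximal_subalgebra scale br U" "core scale br U = {0}"
    using assms unfolding primitive_type3_def primitive_def by blast
  have ex: "\<exists>B1 B2. B1 \<noteq> B2 \<and> {B. minimal_ideal scale br B} = {B1, B2}"
    using assms unfolding primitive_type3_def by (elim conjE) assumption
  obtain B B2 where BB: "B \<noteq> B2" "{B. minimal_ideal scale br B} = {B, B2}"
    using ex by (elim exE conjE) (rule that)
  have "B \<in> {B. minimal_ideal scale br B}" "B2 \<in> {B. minimal_ideal scale br B}"
    unfolding BB(2) by simp_all
  hence B: "minimal_ideal scale br B" and B2: "minimal_ideal scale br B2" by simp_all
  have Ui: "lie_subalgebra scale br U" using U unfolding maximal_subalgebra_def by simp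
  have Bi: "lie_ideal scale br B" using min_ideal[OF B] .
  have B2i: "lie_ideal scale br B2" using min_ideal[OF B2] .
  have nsub: "\<not> B \<subseteq> U" using core_zero[OF U(2) Bi] B unfolding minimal_ideal_def by blast
  have sum: "\<forall>x. \<exists>b\<in>B. \<exists>u\<in>U. x = b + u" using max_sum[OF U(1) Bi nsub] .
  have nsub2: "\<not> B2 \<subseteq> U" using core_zero[OF U(2) B2i] B2 unfolding minimal_ideal_def by blast
  have sum2: "\<forall>x. \<exists>b\<in>B2. \<exists>u\<in>U. x = b + u" using max_sum[OF U(1) B2i nsub2] .
  let ?C = "centralizer br B"
  have Ci: "lie_ideal scale br ?C" using centralizer_ideal[OF Bi] .
  have B2C: "B2 \<subseteq> ?C" using min_commute[OF B B2 BB(1)] by blast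
  have "lie_ideal scale br (U \<inter> B)"
  proof (rule ideal_from_sum[OF _ sum2])
    show "subspace (U \<inter> B)" using subspace_inter sub_sub[OF Ui] ideal_sub[OF Bi] by blast
    fix p w assume "p \<in> B2" "w \<in> U \<inter> B"
    hence "br p w = 0" using cent_zero B2C by blast
    thus "br p w \<in> U \<inter> B" using subspace_0 sub_sub[OF Ui] ideal_sub[OF Bi] by simp
  next
    fix q w assume "q \<in> U" "w \<in> U \<inter> B"
    thus "br q w \<in> U \<inter> B" using sub_br[OF Ui] ideal_l[OF Bi] by blast
  qed
  hence UB: "U \<inter> B = {0}" using core_zero[OF U(2)] by blast
  have "lie_ideal scale br (?C \<inter> U)"
  proof (rule ideal_from_sum[OF _ sum])
    show "subspace (?C \<inter> U)" using subspace_inter sub_sub[OF Ui] ideal_sub[OF Ci] by blast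
    fix p w assume "p \<in> B" "w \<in> ?C \<inter> U"
    hence "br p w = 0" using cent_zero' by blast
    thus "br p w \<in> ?C \<inter> U" using subspace_0 sub_sub[OF Ui] ideal_sub[OF Ci] by simp
  next
    fix q w assume "q \<in> U" "w \<in> ?C \<inter> U"
    thus "br q w \<in> ?C \<inter> U" using sub_br[OF Ui] ideal_l[OF Ci] by blast
  qed
  hence CU: "?C \<inter> U = {0}" using core_zero[OF U(2)] by blast
  have "complements U B" unfolding complements_def using sum UB by blast
  moreover have "complements U ?C" unfolding complements_def using sum2 CU B2C by blast
  ultimately show ?thesis using B Ui by blast
qed

end


context lie begin

lemma cond2_type:
  assumes B: "minimal_ideal scale br B" and Ui: "lie_subalgebra scale br U"
    and cB: "complements U B" and cC: "complements U (centralizer br B)"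
  shows "primitive_type1 scale br \<or> primitive_type3 scale br"
proof -
  let ?C = "centralizer br B"
  have Bi: "lie_ideal scale br B" using min_ideal[OF B] .
  have Ci: "lie_ideal scale br ?C" using centralizer_ideal[OF Bi] .
  have sB: "subspace B" using ideal_sub[OF Bi] .
  have sC: "subspace ?C" using ideal_sub[OF Ci] .
  have sU: "subspace U" using sub_sub[OF Ui] .
  have sumB: "\<forall>x. \<exists>b\<in>B. \<exists>u\<in>U. x = b + u" and UB: "B \<inter> U = {0}"
    using cB unfolding complements_def by auto
  have sumC: "\<forall>x. \<exists>c\<in>?C. \<exists>u\<in>U. x = c + u" and UC: "?C \<inter> U = {0}"
    using cC unfolding complements_def by auto
  obtain b0 where b0: "b0 \<in> B" "b0 \<noteq> 0" using min_nz[OF B] by blast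
  have Bmin: "\<And>J. lie_ideal scale br J \<Longrightarrow> J \<subseteq> B \<Longrightarrow> J = {0} \<or> J = B"
    using B unfolding minimal_ideal_def by blast
  have prim: "primitive scale br"
    unfolding primitive_def
  proof (intro exI conjI)
    show "maximal_subalgebra scale br U"
      unfolding maximal_subalgebra_def
    proof (intro conjI allI impI)
      show "lie_subalgebra scale br U" by fact
      show "U \<noteq> UNIV" using b0 UB by blast
      fix V assume V: "lie_subalgebra scale br V \<and> U \<subseteq> V"
      have sV: "subspace V" using sub_sub V by blast
      have "lie_ideal scale br (V \<inter> B)"
      proof (rule ideal_from_sum[OF _ sumC])
        show "subspace (V \<inter> B)" using subspace_inter sV sB by blast
        fix p w assume "p \<in> ?C" "w \<in> V \<inter> B"
        hence "br p w = 0" using cent_zero by blast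
        thus "br p w \<in> V \<inter> B" using subspace_0 sV sB by simp
      next
        fix q w assume "q \<in> U" "w \<in> V \<inter> B"
        thus "br q w \<in> V \<inter> B" using sub_br V ideal_l[OF Bi] by blast
      qed
      hence "V \<inter> B = {0} \<or> V \<inter> B = B" using Bmin by blast
      thus "V = U \<or> V = UNIV"
      proof
        assume h: "V \<inter> B = {0}"
        have "V \<subseteq> U"
        proof
          fix v assume v: "v \<in> V"
          obtain b u where bu: "b \<in> B" "u \<in> U" "v = b + u" using sumB by blast
          have "b = v - u" using bu by simp
          hence "b \<in> V" using subspace_diff[OF sV v] bu V by blast
          hence "b = 0" using h bu by blast
          thus "v \<in> U" using bu by simp
        qed
        thus ?thesis using V by blast
      next
        assume h: "V \<inter> B = B"
        have "V = UNIV"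
        proof (rule set_eqI, rule iffI)
          fix x show "x \<in> V"
          proof -
            obtain b u where bu: "b \<in> B" "u \<in> U" "x = b + u" using sumB by blast
            thus ?thesis using subspace_add[OF sV] h V by blast
          qed
        qed simp
        thus ?thesis by blast
      qed
    qed
    have ideal0: "I \<subseteq> {0}" if I: "lie_ideal scale br I" "I \<subseteq> U" for I
    proof
      fix i assume i: "i \<in> I"
      have "i \<in> ?C" unfolding centralizer_def
      proof (intro CollectI ballI)
        fix b assume "b \<in> B"
        hence "br i b \<in> B \<inter> U" using ideal_r[OF I(1) i] ideal_l[OF Bi] I(2) by blast
        thus "br i b = 0" using UB by blast
      qed
      thus "i \<in> {0}" using UC i I(2) by blast
    qed
    show "core scale br U = {0}"
    proof
      show "core scale br U \<subseteq> {0}" unfolding core_def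
        by (rule span_minimal) (use ideal0 in auto)
      show "{0} \<subseteq> core scale br U" unfolding core_def using span_zero by blast
    qed
  qed
  show ?thesis
  proof (cases "abelian br B")
    case True
    have BC: "B \<subseteq> ?C" using True unfolding abelian_def centralizer_def by blast
    have CB: "?C \<subseteq> B"
    proof
      fix c assume c: "c \<in> ?C"
      obtain b u where bu: "b \<in> B" "u \<in> U" "c = b + u" using sumB by blast
      have "u = c - b" using bu by simp
      hence "u \<in> ?C" using subspace_diff[OF sC c] bu BC by blast
      hence "u = 0" using UC bu by blast
      thus "c \<in> B" using bu by simp
    qed
    have uniq: "B' = B" if B': "minimal_ideal scale br B'" for B'
    proof (rule ccontr)
      assume ne: "B' \<noteq> B"
      have "B' \<subseteq> ?C" using min_commute[OF B B' ne[symmetric]] by blast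
      hence "B' \<subseteq> B \<inter> B'" using CB by blast
      hence "B' \<subseteq> {0}" using min_inter[OF B B' ne[symmetric]] by blast
      thus False using min_nz[OF B'] by blast
    qed
    have "primitive_type1 scale br"
      unfolding primitive_type1_def using prim B uniq True by blast
    thus ?thesis by blast
  next
    case False
    have "lie_ideal scale br (B \<inter> ?C)" using ideal_inter[OF Bi Ci] .
    hence "B \<inter> ?C = {0} \<or> B \<inter> ?C = B" using Bmin by blast
    moreover have "B \<inter> ?C \<noteq> B"
    proof
      assume "B \<inter> ?C = B"
      hence "B \<subseteq> ?C" by blast
      thus False using False unfolding abelian_def centralizer_def by blast
    qed
    ultimately have BC0: "B \<inter> ?C = {0}" by blast
    have Cnz: "?C \<noteq> {0}"
    proof
      assume "?C = {0}"
      hence "b0 \<in> U" using sumC by force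
      thus False using UB b0 by blast
    qed
    have Cmin: "minimal_ideal scale br ?C"
      unfolding minimal_ideal_def
    proof (intro conjI allI impI)
      show "lie_ideal scale br ?C" by fact
      show "?C \<noteq> {0}" by fact
      fix J assume J: "lie_ideal scale br J \<and> J \<subseteq> ?C"
      have sJ: "subspace J" using J ideal_sub by blast
      let ?J' = "{b. b \<in> B \<and> (\<exists>j\<in>J. b + j \<in> U)}"
      have sJ': "subspace ?J'"
        unfolding subspace_def
      proof (intro conjI allI ballI impI)
        show "0 \<in> ?J'" using subspace_0[OF sB] subspace_0[OF sJ] subspace_0[OF sU] by force
        fix x y assume x: "x \<in> ?J'" and y: "y \<in> ?J'"
        then obtain j1 j2 where j: "j1 \<in> J" "x + j1 \<in> U" "j2 \<in> J" "y + j2 \<in> U" by blast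
        have "(x + y) + (j1 + j2) = (x + j1) + (y + j2)" by (simp add: algebra_simps)
        hence "(x + y) + (j1 + j2) \<in> U" using j subspace_add[OF sU] by metis
        moreover have "j1 + j2 \<in> J" using j subspace_add[OF sJ] by blast
        moreover have "x + y \<in> B" using x y subspace_add[OF sB] by blast
        ultimately show "x + y \<in> ?J'" by blast
      next
        fix a x assume x: "x \<in> ?J'"
        then obtain j1 where j: "j1 \<in> J" "x + j1 \<in> U" by blast
        have "scale a x + scale a j1 \<in> U" using j subspace_scale[OF sU] scale_right_distrib by metis
        moreover have "scale a j1 \<in> J" using j subspace_scale[OF sJ] by blast
        moreover have "scale a x \<in> B" using x subspace_scale[OF sB] by blast
        ultimately show "scale a x \<in> ?J'" by blast
      qed
      have "lie_ideal scale br ?J'"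
      proof (rule ideal_from_sum[OF sJ' sumC])
        fix p w assume "p \<in> ?C" "w \<in> ?J'"
        hence "br p w = 0" using cent_zero by blast
        thus "br p w \<in> ?J'" using subspace_0[OF sJ'] by simp
      next
        fix q w assume q: "q \<in> U" and w: "w \<in> ?J'"
        then obtain j where j: "j \<in> J" "w + j \<in> U" by blast
        have "br q (w + j) \<in> U" using sub_br[OF Ui q j(2)] .
        hence "br q w + br q j \<in> U" by (simp add: add_r)
        moreover have "br q j \<in> J" using ideal_l J j by blast
        moreover have "br q w \<in> B" using ideal_l[OF Bi] w by blast
        ultimately show "br q w \<in> ?J'" by blast
      qed
      hence "?J' = {0} \<or> ?J' = B" using Bmin by blast
      thus "J = {0} \<or> J = ?C"
      proof
        assume h: "?J' = {0}"
        have "J \<subseteq> {0}"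
        proof
          fix j assume j: "j \<in> J"
          obtain b u where bu: "b \<in> B" "u \<in> U" "j = b + u" using sumB by blast
          have "-b + j = u" using bu by simp
          moreover have "-b \<in> B" using subspace_neg[OF sB bu(1)] .
          ultimately have "-b \<in> ?J'" using bu(2) j by blast
          hence "b = 0" using h by simp
          hence "j \<in> U" using bu by simp
          thus "j \<in> {0}" using UC j J by blast
        qed
        thus ?thesis using subspace_0[OF sJ] by blast
      next
        assume h: "?J' = B"
        have "?C \<subseteq> J"
        proof
          fix c assume c: "c \<in> ?C"
          obtain b u where bu: "b \<in> B" "u \<in> U" "c = b + u" using sumB by blast
          have "-b \<in> ?J'" using h bu subspace_neg[OF sB] by blast
          then obtain j where j: "j \<in> J" "-b + j \<in> U" by blast
          have "c - j = u - (-b + j)" using bu by simp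
          hence "c - j \<in> U" using subspace_diff[OF sU] bu j by metis
          moreover have "c - j \<in> ?C" using subspace_diff[OF sC c] j J by blast
          ultimately have "c - j = 0" using UC by blast
          thus "c \<in> J" using j by simp
        qed
        thus ?thesis using J by blast
      qed
    qed
    have Cnab: "\<not> abelian br ?C"
    proof
      assume ab: "abelian br ?C"
      have "abelian br B" unfolding abelian_def
      proof (intro ballI)
        fix b1 b2 assume b: "b1 \<in> B" "b2 \<in> B"
        obtain c1 u1 where 1: "c1 \<in> ?C" "u1 \<in> U" "b1 = c1 + u1" using sumC by blast
        obtain c2 u2 where 2: "c2 \<in> ?C" "u2 \<in> U" "b2 = c2 + u2" using sumC by blast
        have u1: "u1 = b1 - c1" and u2: "u2 = b2 - c2" using 1 2 by simp_all
        have "br u1 u2 = br b1 b2 - br b1 c2 - br c1 b2 + br c1 c2"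
          unfolding u1 u2 by (simp add: diff_l diff_r algebra_simps)
        also have "\<dots> = br b1 b2"
          using cent_zero[OF 1(1) b(2)] cent_zero'[OF 2(1) b(1)] ab 1 2 unfolding abelian_def by simp
        finally have "br b1 b2 \<in> U" using sub_br[OF Ui 1(2) 2(2)] by metis
        moreover have "br b1 b2 \<in> B" using ideal_l[OF Bi b(2)] .
        ultimately show "br b1 b2 = 0" using UB by blast
      qed
      thus False using False by blast
    qed
    have BneC: "B \<noteq> ?C" using BC0 min_nz[OF B] by blast
    have mins: "{B'. minimal_ideal scale br B'} = {B, ?C}"
    proof (rule set_eqI, rule iffI)
      fix B' assume "B' \<in> {B'. minimal_ideal scale br B'}"
      hence B': "minimal_ideal scale br B'" by simp
      show "B' \<in> {B, ?C}"
      proof (cases "B' = B")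
        case False
        have "B' \<subseteq> ?C" using min_commute[OF B B' False[symmetric]] by blast
        hence "B' = {0} \<or> B' = ?C" using Cmin min_ideal[OF B'] unfolding minimal_ideal_def by blast
        thus ?thesis using B' unfolding minimal_ideal_def by blast
      qed simp
    qed (use B Cmin in auto)
    have "primitive_type3 scale br"
      unfolding primitive_type3_def
    proof (intro conjI)
      show "primitive scale br" by fact
      show "\<exists>B1 B2. B1 \<noteq> B2 \<and> {B. minimal_ideal scale br B} = {B1, B2}"
        by (rule exI[of _ B], rule exI[of _ ?C], rule conjI[OF BneC mins])
      show "\<forall>B'. minimal_ideal scale br B' \<longrightarrow> \<not> abelian br B'"
      proof (intro allI impI)
        fix B' assume "minimal_ideal scale br B'"
        hence "B' \<in> {B'. minimal_ideal scale br B'}" by simp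
        hence "B' = B \<or> B' = ?C" unfolding mins by simp
        thus "\<not> abelian br B'" using False Cnab by metis
      qed
    qed
    thus ?thesis by blast
  qed
qed

end


context lie begin

lemma inter0: "A \<inter> B = {0} \<Longrightarrow> (x::'a) - y \<in> A \<Longrightarrow> x - y \<in> B \<Longrightarrow> x = y"
proof -
  assume "A \<inter> B = {0}" "x - y \<in> A" "x - y \<in> B"
  hence "x - y = 0" by blast
  thus "x = y" by simp
qed

lemma coset_mem: "subspace C \<Longrightarrow> z \<in> coset C x \<longleftrightarrow> z - x \<in> C"
  unfolding coset_def by (auto simp: image_iff) (metis add_diff_cancel_left' diff_add_cancel)

lemma coset_eq: assumes "subspace C" shows "coset C x = coset C y \<longleftrightarrow> x - y \<in> C"
proof
  assume "coset C x = coset C y"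
  moreover have "x \<in> coset C x" using coset_mem[OF assms] subspace_0[OF assms] by simp
  ultimately show "x - y \<in> C" using coset_mem[OF assms] by blast
next
  assume h: "x - y \<in> C"
  have "y - x \<in> C" using subspace_neg[OF assms h] by simp
  show "coset C x = coset C y"
  proof (rule set_eqI)
    fix z
    have "z - y = (z - x) + (x - y)" "z - x = (z - y) + (y - x)" by simp_all
    thus "z \<in> coset C x \<longleftrightarrow> z \<in> coset C y"
      using coset_mem[OF assms] subspace_add[OF assms] h \<open>y - x \<in> C\<close> by metis
  qed
qed

lemma rep_coset: assumes "subspace C" shows "rep (coset C x) - x \<in> C"
proof -
  have "x \<in> coset C x" using coset_mem[OF assms] subspace_0[OF assms] by simp
  hence "rep (coset C x) \<in> coset C x" unfolding rep_def by (rule someI)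
  thus ?thesis using coset_mem[OF assms] by blast
qed

lemma coset_rep: assumes "subspace C" "X \<in> quot C" shows "coset C (rep X) = X"
proof -
  obtain x where X: "X = coset C x" using assms(2) unfolding quot_def by blast
  show ?thesis unfolding X coset_eq[OF assms(1)] by (rule rep_coset[OF assms(1)])
qed

lemma cond2_iso:
  assumes B: "minimal_ideal scale br B" and Ui: "lie_subalgebra scale br U"
    and cB: "complements U B" and cC: "complements U (centralizer br B)"
  shows "iso_semidirect scale br B"
proof -
  define C where "C = centralizer br B"
  have Bi: "lie_ideal scale br B" using min_ideal[OF B] .
  have Ci: "lie_ideal scale br C" unfolding C_def using centralizer_ideal[OF Bi] .
  have sB: "subspace B" using ideal_sub[OF Bi] .
  have sC: "subspace C" using ideal_sub[OF Ci] .
  have sU: "subspace U" using sub_sub[OF Ui] .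
  have sumB: "\<forall>x. \<exists>b\<in>B. \<exists>u\<in>U. x = b + u" and UB: "B \<inter> U = {0}"
    using cB unfolding complements_def by auto
  have sumC: "\<forall>x. \<exists>c\<in>C. \<exists>u\<in>U. x = c + u" and UC: "C \<inter> U = {0}"
    using cC unfolding complements_def C_def by auto
  have cz: "\<And>c b. c \<in> C \<Longrightarrow> b \<in> B \<Longrightarrow> br c b = 0" unfolding C_def using cent_zero by blast
  define pB where "pB x = (SOME b. b \<in> B \<and> x - b \<in> U)" for x
  have pB: "pB x \<in> B \<and> x - pB x \<in> U" for x
  proof -
    obtain b u where "b \<in> B" "u \<in> U" "x = b + u" using sumB by blast
    hence "\<exists>b. b \<in> B \<and> x - b \<in> U" by force
    thus ?thesis unfolding pB_def by (rule someI_ex)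
  qed
  have pBu: "pB x = b" if "b \<in> B" "x - b \<in> U" for x b
  proof -
    have "pB x - b \<in> B" using subspace_diff[OF sB] pB that by blast
    moreover have "pB x - b = (x - b) - (x - pB x)" by simp
    hence "pB x - b \<in> U" using subspace_diff[OF sU] pB that by metis
    ultimately have "pB x - b \<in> B \<inter> U" by blast
    hence "pB x - b = 0" using UB by blast
    thus ?thesis by simp
  qed
  define u where "u x = x - pB x" for x
  have uU: "u x \<in> U" for x using pB unfolding u_def by blast
  have xdec: "pB x + u x = x" for x unfolding u_def by simp
  define f where "f x = (pB x, coset C (u x))" for x
  have rc: "rep (coset C z) - z \<in> C" for z using rep_coset[OF sC] .
  have "bij_betw f UNIV (B \<times> quot C)"
    unfolding bij_betw_def
  proof
    show "inj f"
    proof (rule injI)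
      fix x y assume "f x = f y"
      hence 1: "pB x = pB y" and "coset C (u x) = coset C (u y)" unfolding f_def by auto
      hence "u x - u y \<in> C" using coset_eq[OF sC] by blast
      moreover have "u x - u y \<in> U" using subspace_diff[OF sU uU uU] .
      ultimately have "u x = u y" using inter0[OF UC] by blast
      hence "pB x + u x = pB y + u y" using 1 by simp
      thus "x = y" by (simp only: xdec)
    qed
    show "range f = B \<times> quot C"
    proof
      show "range f \<subseteq> B \<times> quot C" unfolding f_def quot_def using pB by auto
      show "B \<times> quot C \<subseteq> range f"
      proof
        fix p assume "p \<in> B \<times> quot C"
        then obtain b z where p: "p = (b, coset C z)" "b \<in> B" unfolding quot_def by auto
        obtain c v where cv: "c \<in> C" "v \<in> U" "z = c + v" using sumC by blast
        have pb: "pB (b + v) = b" using pBu p cv by simp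
        have "u (b + v) = v" unfolding u_def pb by simp
        moreover have "coset C v = coset C z" using coset_eq[OF sC] cv subspace_neg[OF sC] by simp
        ultimately have "f (b + v) = p" unfolding f_def using pb p by simp
        thus "p \<in> range f" by (metis rangeI)
      qed
    qed
  qed
  moreover have "f (x + y) = sd_add C (f x) (f y)" for x y
  proof -
    have pa: "pB (x + y) = pB x + pB y"
    proof (rule pBu)
      show "pB x + pB y \<in> B" using subspace_add[OF sB] pB by blast
      have "x + y - (pB x + pB y) = (x - pB x) + (y - pB y)" by (simp add: algebra_simps)
      thus "x + y - (pB x + pB y) \<in> U" using subspace_add[OF sU] pB by metis
    qed
    have "u (x + y) = u x + u y" unfolding u_def pa by simp
    moreover have "(rep (coset C (u x)) + rep (coset C (u y))) - (u x + u y) \<in> C"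
      using subspace_add[OF sC rc rc] by (simp add: algebra_simps)
    hence "coset C (rep (coset C (u x)) + rep (coset C (u y))) = coset C (u x + u y)"
      using coset_eq[OF sC] by blast
    ultimately show ?thesis
      unfolding f_def sd_add_def q_add_def using pa by simp
  qed
  moreover have "f (scale a x) = sd_scale scale C a (f x)" for a x
  proof -
    have pa: "pB (scale a x) = scale a (pB x)"
    proof (rule pBu)
      show "scale a (pB x) \<in> B" using subspace_scale[OF sB] pB by blast
      have "scale a x - scale a (pB x) = scale a (x - pB x)" by (simp add: scale_right_diff_distrib)
      thus "scale a x - scale a (pB x) \<in> U" using subspace_scale[OF sU] pB by metis
    qed
    have "u (scale a x) = scale a (u x)" unfolding u_def pa by (simp add: scale_right_diff_distrib)
    moreover have "scale a (rep (coset C (u x))) - scale a (u x) \<in> C"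
      using subspace_scale[OF sC rc] by (simp add: scale_right_diff_distrib)
    hence "coset C (scale a (rep (coset C (u x)))) = coset C (scale a (u x))"
      using coset_eq[OF sC] by blast
    ultimately show ?thesis
      unfolding f_def sd_scale_def q_scale_def using pa by simp
  qed
  moreover have "f (br x y) = sd_br br C (f x) (f y)" for x y
  proof -
    define r1 where "r1 = rep (coset C (u x))"
    define r2 where "r2 = rep (coset C (u y))"
    have c1: "r1 - u x \<in> C" and c2: "r2 - u y \<in> C" unfolding r1_def r2_def using rc by auto
    have e1: "br r1 (pB y) = br (u x) (pB y)"
    proof -
      have "br (r1 - u x) (pB y) = 0" using cz c1 pB by blast
      thus ?thesis by (simp add: diff_l)
    qed
    have e2: "br r2 (pB x) = br (u y) (pB x)"
    proof -
      have "br (r2 - u y) (pB x) = 0" using cz c2 pB by blast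
      thus ?thesis by (simp add: diff_l)
    qed
    define v where "v = br (pB x) (pB y) + br (u x) (pB y) - br (u y) (pB x)"
    have vB: "v \<in> B" unfolding v_def
    proof (rule subspace_diff[OF sB], rule subspace_add[OF sB])
      show "br (pB x) (pB y) \<in> B" using ideal_l[OF Bi] pB by blast
      show "br (u x) (pB y) \<in> B" using ideal_l[OF Bi] pB by blast
      show "br (u y) (pB x) \<in> B" using ideal_l[OF Bi] pB by blast
    qed
    have "br x y = br (pB x + u x) (pB y + u y)" by (simp only: xdec)
    also have "\<dots> = br (pB x) (pB y) + br (pB x) (u y) + br (u x) (pB y) + br (u x) (u y)"
      by (simp add: add_l add_r add.assoc)
    also have "\<dots> = v + br (u x) (u y)" unfolding v_def using anti[of "pB x" "u y"]
      by (simp add: algebra_simps)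
    finally have bxy: "br x y = v + br (u x) (u y)" .
    have pb: "pB (br x y) = v"
    proof (rule pBu[OF vB])
      have "br x y - v = br (u x) (u y)" using bxy by simp
      thus "br x y - v \<in> U" using sub_br[OF Ui uU uU] by simp
    qed
    have "u (br x y) = br x y - v" unfolding u_def pb ..
    also have "\<dots> = br (u x) (u y)" using bxy by simp
    finally have ub: "u (br x y) = br (u x) (u y)" .
    have "br r1 r2 - br (u x) (u y) = br (r1 - u x) r2 + br (u x) (r2 - u y)"
      by (simp add: diff_l diff_r)
    hence cc: "br r1 r2 - br (u x) (u y) \<in> C"
      using subspace_add[OF sC ideal_r[OF Ci c1] ideal_l[OF Ci c2]] by simp
    have ce: "coset C (br r1 r2) = coset C (br (u x) (u y))" using coset_eq[OF sC] cc by blast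
    have "f (br x y) = (v, coset C (br (u x) (u y)))" unfolding f_def pb ub ..
    also have "\<dots> = sd_br br C (f x) (f y)"
      unfolding f_def sd_br_def q_br_def fst_conv snd_conv r1_def[symmetric] r2_def[symmetric]
        e1 e2 ce v_def ..
    finally show ?thesis .
  qed
  ultimately show ?thesis unfolding iso_semidirect_def Let_def C_def by blast
qed

end


context lie begin

lemma iso_cond2:
  assumes B: "minimal_ideal scale br B" and iso: "iso_semidirect scale br B"
  shows cond2
proof -
  define C where "C = centralizer br B"
  have Bi: "lie_ideal scale br B" using min_ideal[OF B] .
  have Ci: "lie_ideal scale br C" unfolding C_def using centralizer_ideal[OF Bi] .
  have sB: "subspace B" using ideal_sub[OF Bi] .
  have sC: "subspace C" using ideal_sub[OF Ci] .
  have cz: "\<And>c b. c \<in> C \<Longrightarrow> b \<in> B \<Longrightarrow> br c b = 0" unfolding C_def using cent_zero by blast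
  obtain f where bij: "bij_betw f UNIV (B \<times> quot C)"
    and fadd: "\<And>x y. f (x + y) = sd_add C (f x) (f y)"
    and fsc: "\<And>a x. f (scale a x) = sd_scale scale C a (f x)"
    and fbr: "\<And>x y. f (br x y) = sd_br br C (f x) (f y)"
    using iso unfolding iso_semidirect_def Let_def C_def by blast
  define \<beta> where "\<beta> x = fst (f x)" for x
  define r where "r x = rep (snd (f x))" for x
  have fin: "f x \<in> B \<times> quot C" for x using bij unfolding bij_betw_def by blast
  have \<beta>B: "\<beta> x \<in> B" for x using fin unfolding \<beta>_def by (auto simp: mem_Times_iff)
  have fx: "f x = (\<beta> x, coset C (r x))" for x
  proof -
    have "snd (f x) \<in> quot C" using fin by (auto simp: mem_Times_iff)
    hence "coset C (r x) = snd (f x)" unfolding r_def using coset_rep[OF sC] by blast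
    thus ?thesis unfolding \<beta>_def by (metis prod.collapse)
  qed
  have rc: "rep (coset C z) - z \<in> C" for z using rep_coset[OF sC] .
  have cdiff: "coset C a = coset C b \<Longrightarrow> a - b \<in> C" for a b using coset_eq[OF sC] by blast
  have \<beta>add: "\<beta> (x + y) = \<beta> x + \<beta> y" and radd: "r (x + y) - (r x + r y) \<in> C" for x y
  proof -
    have e: "f (x + y) = (\<beta> x + \<beta> y, coset C (rep (coset C (r x)) + rep (coset C (r y))))"
      using fadd[of x y] unfolding sd_add_def q_add_def fx by simp
    thus "\<beta> (x + y) = \<beta> x + \<beta> y" using fx[of "x+y"] by simp
    have "coset C (r (x + y)) = coset C (rep (coset C (r x)) + rep (coset C (r y)))"
      using e fx[of "x+y"] by simp
    hence 1: "r (x + y) - (rep (coset C (r x)) + rep (coset C (r y))) \<in> C" by (rule cdiff)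
    have 2: "(rep (coset C (r x)) + rep (coset C (r y))) - (r x + r y) \<in> C"
      using subspace_add[OF sC rc rc] by (simp add: algebra_simps)
    have "r (x + y) - (r x + r y) = (r (x + y) - (rep (coset C (r x)) + rep (coset C (r y))))
       + ((rep (coset C (r x)) + rep (coset C (r y))) - (r x + r y))" by simp
    thus "r (x + y) - (r x + r y) \<in> C" using subspace_add[OF sC 1 2] by (simp only:)
  qed
  have \<beta>sc: "\<beta> (scale a x) = scale a (\<beta> x)" and rsc: "r (scale a x) - scale a (r x) \<in> C" for a x
  proof -
    have e: "f (scale a x) = (scale a (\<beta> x), coset C (scale a (rep (coset C (r x)))))"
      using fsc[of a x] unfolding sd_scale_def q_scale_def fx by simp
    thus "\<beta> (scale a x) = scale a (\<beta> x)" using fx[of "scale a x"] by simp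
    have "coset C (r (scale a x)) = coset C (scale a (rep (coset C (r x))))"
      using e fx[of "scale a x"] by simp
    hence 1: "r (scale a x) - scale a (rep (coset C (r x))) \<in> C" by (rule cdiff)
    have 2: "scale a (rep (coset C (r x))) - scale a (r x) \<in> C"
      using subspace_scale[OF sC rc] by (simp add: scale_right_diff_distrib)
    have "r (scale a x) - scale a (r x) = (r (scale a x) - scale a (rep (coset C (r x))))
       + (scale a (rep (coset C (r x))) - scale a (r x))" by simp
    thus "r (scale a x) - scale a (r x) \<in> C" using subspace_add[OF sC 1 2] by (simp only:)
  qed
  have \<beta>br: "\<beta> (br x y) = br (\<beta> x) (\<beta> y) + br (rep (coset C (r x))) (\<beta> y) - br (rep (coset C (r y))) (\<beta> x)"
    and rbr: "r (br x y) - br (r x) (r y) \<in> C" for x y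
  proof -
    have e: "f (br x y) = (br (\<beta> x) (\<beta> y) + br (rep (coset C (r x))) (\<beta> y) - br (rep (coset C (r y))) (\<beta> x),
        coset C (br (rep (coset C (r x))) (rep (coset C (r y)))))"
      using fbr[of x y] unfolding sd_br_def q_br_def fx by simp
    thus "\<beta> (br x y) = br (\<beta> x) (\<beta> y) + br (rep (coset C (r x))) (\<beta> y) - br (rep (coset C (r y))) (\<beta> x)"
      using fx[of "br x y"] by simp
    have "coset C (r (br x y)) = coset C (br (rep (coset C (r x))) (rep (coset C (r y))))"
      using e fx[of "br x y"] by simp
    hence 1: "r (br x y) - br (rep (coset C (r x))) (rep (coset C (r y))) \<in> C" by (rule cdiff)
    define r1 where "r1 = rep (coset C (r x))"
    define r2 where "r2 = rep (coset C (r y))"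
    have c1: "r1 - r x \<in> C" and c2: "r2 - r y \<in> C" unfolding r1_def r2_def using rc by auto
    have "br r1 r2 - br (r x) (r y) = br (r1 - r x) r2 + br (r x) (r2 - r y)"
      by (simp add: diff_l diff_r)
    hence 2: "br r1 r2 - br (r x) (r y) \<in> C"
      using subspace_add[OF sC ideal_r[OF Ci c1] ideal_l[OF Ci c2]] by simp
    have "r (br x y) - br (r x) (r y) = (r (br x y) - br r1 r2) + (br r1 r2 - br (r x) (r y))" by simp
    thus "r (br x y) - br (r x) (r y) \<in> C" using subspace_add[OF sC 1[folded r1_def r2_def] 2] by (simp only:)
  qed
  have repC: "br (rep (coset C z)) b = br z b" if "b \<in> B" for z b
  proof -
    have "br (rep (coset C z) - z) b = 0" using cz[OF rc that] .
    thus ?thesis by (simp add: diff_l)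
  qed
  have \<beta>br': "\<beta> (br x y) = br (\<beta> x) (\<beta> y) + br (r x) (\<beta> y) - br (r y) (\<beta> x)" for x y
    using \<beta>br[of x y] repC \<beta>B by simp
  have surj: "\<exists>x. \<beta> x = b \<and> r x - z \<in> C" if "b \<in> B" for b z
  proof -
    have "(b, coset C z) \<in> B \<times> quot C" using that unfolding quot_def by auto
    then obtain x where "f x = (b, coset C z)" using bij unfolding bij_betw_def by (metis imageE)
    hence "\<beta> x = b" "coset C (r x) = coset C z" using fx[of x] by auto
    thus ?thesis using cdiff by blast
  qed
  have inj: "x = y" if "\<beta> x = \<beta> y" "r x - r y \<in> C" for x y
  proof -
    have "coset C (r x) = coset C (r y)" using that(2) coset_eq[OF sC] by blast
    hence "f x = f y" using fx that(1) by simp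
    thus ?thesis using bij unfolding bij_betw_def inj_def by blast
  qed
  have \<beta>0: "\<beta> 0 = 0" using \<beta>add[of 0 0] by simp
  have r0: "r 0 \<in> C" using rsc[of 0 0] by simp
  have \<beta>diff: "\<beta> (x - y) = \<beta> x - \<beta> y" for x y
    using \<beta>add[of "x - y" y] by (simp add: algebra_simps)
  define B' where "B' = {x. r x \<in> C}"
  define U' where "U' = {x. \<beta> x = 0}"
  have rB': "r x \<in> C \<longleftrightarrow> x \<in> B'" for x unfolding B'_def by simp
  have sU': "subspace U'"
    unfolding subspace_def U'_def using \<beta>0 \<beta>add \<beta>sc by simp
  have U'i: "lie_subalgebra scale br U'"
    unfolding lie_subalgebra_def
  proof (intro conjI ballI)
    show "subspace U'" by fact
    fix x y assume "x \<in> U'" "y \<in> U'"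
    thus "br x y \<in> U'" unfolding U'_def using \<beta>br' by simp
  qed
  have inC: "a \<in> C" if "a - b \<in> C" "b \<in> C" for a b
  proof -
    have "a = (a - b) + b" by simp
    thus ?thesis using subspace_add[OF sC that] by metis
  qed
  have sB': "subspace B'"
    unfolding subspace_def
  proof (intro conjI ballI allI)
    show "0 \<in> B'" using r0 rB' by blast
    fix x y assume "x \<in> B'" "y \<in> B'"
    hence "r x + r y \<in> C" using subspace_add[OF sC] rB' by blast
    thus "x + y \<in> B'" using inC[OF radd] rB' by blast
  next
    fix c x assume "x \<in> B'"
    hence "scale c (r x) \<in> C" using subspace_scale[OF sC] rB' by blast
    thus "scale c x \<in> B'" using inC[OF rsc] rB' by blast
  qed
  have B'i: "lie_ideal scale br B'"
    unfolding lie_ideal_def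
  proof (intro conjI allI ballI)
    show "subspace B'" by fact
    fix x y assume "y \<in> B'"
    hence "br (r x) (r y) \<in> C" using ideal_l[OF Ci] unfolding B'_def by blast
    thus "br x y \<in> B'" unfolding B'_def using inC[OF rbr] by blast
  qed
  have B'U': "B' \<inter> U' = {0}"
  proof
    show "B' \<inter> U' \<subseteq> {0}"
    proof
      fix x assume x: "x \<in> B' \<inter> U'"
      have "r x - r 0 \<in> C" using x r0 subspace_diff[OF sC] unfolding B'_def by blast
      moreover have "\<beta> x = \<beta> 0" using x \<beta>0 unfolding U'_def by simp
      ultimately show "x \<in> {0}" using inj by blast
    qed
    show "{0} \<subseteq> B' \<inter> U'" using subspace_0[OF sB'] subspace_0[OF sU'] by blast
  qed
  have sum': "\<forall>x. \<exists>b\<in>B'. \<exists>u\<in>U'. x = b + u"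
  proof
    fix x
    obtain y where y: "\<beta> y = \<beta> x" "r y - 0 \<in> C" using surj[OF \<beta>B] by blast
    have "y \<in> B'" using y unfolding B'_def by simp
    moreover have "x - y \<in> U'" unfolding U'_def using \<beta>diff y by simp
    ultimately show "\<exists>b\<in>B'. \<exists>u\<in>U'. x = b + u" by (metis add.commute diff_add_cancel)
  qed
  have kf: "\<beta> (br x y) = br (\<beta> x + r x) (\<beta> y)" if "y \<in> B'" for x y
  proof -
    have "br (r y) (\<beta> x) = 0" using cz[OF _ \<beta>B] that unfolding B'_def by blast
    thus ?thesis using \<beta>br'[of x y] by (simp add: add_l)
  qed
  have \<beta>inj: "y = 0" if "y \<in> B'" "\<beta> y = 0" for y
    using B'U' that unfolding U'_def by blast
  let ?D = "centralizer br B'"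
  have Dchar: "x \<in> ?D \<longleftrightarrow> \<beta> x + r x \<in> C" for x
  proof
    assume xD: "x \<in> ?D"
    show "\<beta> x + r x \<in> C" unfolding C_def centralizer_def
    proof (intro CollectI ballI)
      fix b assume b: "b \<in> B"
      obtain y where y: "\<beta> y = b" "r y - 0 \<in> C" using surj[OF b] by blast
      hence yB: "y \<in> B'" unfolding B'_def by simp
      hence "br x y = 0" using xD unfolding centralizer_def by blast
      hence "\<beta> (br x y) = 0" using \<beta>0 by simp
      thus "br (\<beta> x + r x) b = 0" using kf[OF yB] y by simp
    qed
  next
    assume h: "\<beta> x + r x \<in> C"
    show "x \<in> ?D" unfolding centralizer_def
    proof (intro CollectI ballI)
      fix y assume yB: "y \<in> B'"
      have "br x y \<in> B'" using ideal_l[OF B'i yB] .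
      moreover have "\<beta> (br x y) = 0" using kf[OF yB] cz[OF h \<beta>B] by simp
      ultimately show "br x y = 0" using \<beta>inj by blast
    qed
  qed
  have compD: "complements U' ?D"
    unfolding complements_def
  proof (intro conjI allI)
    fix x
    obtain d where d: "\<beta> d = \<beta> x" "r d - (- \<beta> x) \<in> C" using surj[OF \<beta>B] by blast
    have "\<beta> d + r d \<in> C" using d by (simp add: algebra_simps)
    hence "d \<in> ?D" using Dchar by blast
    moreover have "x - d \<in> U'" unfolding U'_def using \<beta>diff d by simp
    ultimately show "\<exists>a\<in>?D. \<exists>u\<in>U'. x = a + u" by (metis add.commute diff_add_cancel)
  next
    show "?D \<inter> U' = {0}"
    proof
      show "?D \<inter> U' \<subseteq> {0}"
      proof
        fix x assume x: "x \<in> ?D \<inter> U'"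
        hence a: "\<beta> x + r x \<in> C" and b: "\<beta> x = 0" using Dchar unfolding U'_def by auto
        from a have "r x \<in> C" unfolding b by simp
        thus "x \<in> {0}" using x B'U' unfolding B'_def by blast
      qed
      show "{0} \<subseteq> ?D \<inter> U'" using subspace_0[OF ideal_sub[OF centralizer_ideal[OF B'i]]] subspace_0[OF sU'] by blast
    qed
  qed
  have compB: "complements U' B'" unfolding complements_def using sum' B'U' by blast
  have B'min: "minimal_ideal scale br B'"
    unfolding minimal_ideal_def
  proof (intro conjI allI impI)
    show "lie_ideal scale br B'" by fact
    obtain b where b: "b \<in> B" "b \<noteq> 0" using min_nz[OF B] by blast
    obtain x where x: "\<beta> x = b" "r x - 0 \<in> C" using surj[OF b(1)] by blast
    have "x \<in> B'" "x \<noteq> 0" using x b \<beta>0 unfolding B'_def by auto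
    thus "B' \<noteq> {0}" by blast
    fix J assume J: "lie_ideal scale br J \<and> J \<subseteq> B'"
    have sJ: "subspace J" using J ideal_sub by blast
    show "J = {0} \<or> J = B'"
    proof (cases "J = {0}")
      case False
      then obtain j0 where j0: "j0 \<in> J" "j0 \<noteq> 0" using subspace_0[OF sJ] by blast
      let ?J0 = "\<beta> ` J"
      have sJ0: "subspace ?J0"
        unfolding subspace_def
      proof (intro conjI ballI allI)
        show "0 \<in> ?J0" using subspace_0[OF sJ] \<beta>0 by (metis image_eqI)
        fix x y assume "x \<in> ?J0" "y \<in> ?J0"
        then obtain x' y' where "x' \<in> J" "y' \<in> J" "x = \<beta> x'" "y = \<beta> y'" by blast
        thus "x + y \<in> ?J0" using \<beta>add subspace_add[OF sJ] by (metis image_eqI)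
      next
        fix c x assume "x \<in> ?J0"
        then obtain x' where "x' \<in> J" "x = \<beta> x'" by blast
        thus "scale c x \<in> ?J0" using \<beta>sc subspace_scale[OF sJ] by (metis image_eqI)
      qed
      have J0i: "lie_ideal scale br ?J0"
        unfolding lie_ideal_def
      proof (intro conjI allI ballI)
        show "subspace ?J0" by fact
        fix z b assume "b \<in> ?J0"
        then obtain j where j: "j \<in> J" "b = \<beta> j" by blast
        obtain x where x: "\<beta> x = 0" "r x - z \<in> C" using surj[OF subspace_0[OF sB]] by blast
        have jB: "j \<in> B'" using j J by blast
        have "br x j \<in> J" using ideal_l J j by blast
        moreover have "\<beta> (br x j) = br z b"
        proof -
          have "\<beta> (br x j) = br (r x) b" using kf[OF jB] x j by simp
          also have "\<dots> = br z b + br (r x - z) b" by (simp add: diff_l)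
          also have "br (r x - z) b = 0" using cz[OF x(2)] j \<beta>B by simp
          finally show ?thesis by simp
        qed
        ultimately show "br z b \<in> ?J0" by (metis image_eqI)
      qed
      have "?J0 \<subseteq> B" using \<beta>B by blast
      moreover have "?J0 \<noteq> {0}"
      proof
        assume "?J0 = {0}"
        hence "\<beta> j0 = 0" using j0 by blast
        thus False using \<beta>inj j0 J by blast
      qed
      ultimately have J0B: "?J0 = B" using B J0i unfolding minimal_ideal_def by blast
      have "B' \<subseteq> J"
      proof
        fix y assume y: "y \<in> B'"
        have "\<beta> y \<in> ?J0" using J0B \<beta>B by blast
        then obtain j where j: "j \<in> J" "\<beta> j = \<beta> y" by force
        have "r j \<in> C" "r y \<in> C" using j J y unfolding B'_def by blast+
        hence "r y - r j \<in> C" using subspace_diff[OF sC] by blast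
        hence "y = j" using inj j by metis
        thus "y \<in> J" using j by simp
      qed
      thus ?thesis using J by blast
    qed simp
  qed
  show ?thesis using B'min U'i compB compD by blast
qed

end


theorem theorem1p6:
  fixes scale :: "'f::field \<Rightarrow> 'a::ab_group_add \<Rightarrow> 'a"
    and br :: "'a \<Rightarrow> 'a \<Rightarrow> 'a"
  assumes "lie_algebra scale br"
    and "fin_dim scale"
  shows "((primitive_type1 scale br \<or> primitive_type3 scale br) \<longleftrightarrow>
           (\<exists>B U. minimal_ideal scale br B \<and> lie_subalgebra scale br U \<and>
              complements U B \<and> complements U (centralizer br B)))
       \<and> ((\<exists>B U. minimal_ideal scale br B \<and> lie_subalgebra scale br U \<and>
              complements U B \<and> complements U (centralizer br B)) \<longleftrightarrow>
           (\<exists>B. minimal_ideal scale br B \<and> iso_semidirect scale br B))"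
proof -
  interpret L: lie scale br using lie_from[OF assms(1)] .
  have 1: "(primitive_type1 scale br \<or> primitive_type3 scale br) \<longleftrightarrow> L.cond2"
  proof
    assume "primitive_type1 scale br \<or> primitive_type3 scale br"
    thus L.cond2 using L.type1_cond2 L.type3_cond2 by blast
  next
    assume L.cond2
    then obtain B U where "minimal_ideal scale br B" "lie_subalgebra scale br U"
      "complements U B" "complements U (centralizer br B)" by blast
    thus "primitive_type1 scale br \<or> primitive_type3 scale br" by (rule L.cond2_type)
  qed
  have 2: "L.cond2 \<longleftrightarrow> (\<exists>B. minimal_ideal scale br B \<and> iso_semidirect scale br B)"
  proof
    assume L.cond2
    then obtain B U where "minimal_ideal scale br B" "lie_subalgebra scale br U"
      "complements U B" "complements U (centralizer br B)" by blast
    thus "\<exists>B. minimal_ideal scale br B \<and> iso_semidirect scale br B" using L.cond2_iso by blast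
  next
    assume "\<exists>B. minimal_ideal scale br B \<and> iso_semidirect scale br B"
    then obtain B where "minimal_ideal scale br B" "iso_semidirect scale br B" by blast
    thus L.cond2 by (rule L.iso_cond2)
  qed
  show ?thesis using 1 2 by (rule conjI)
qed

end
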